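(* Let $n,m\in\mathbb{N}$ and let $(A_1,B_1)\neq(A_2,B_2)$ be two pairs in $X_n^\star\times X_m^\star$ such that $A_1B_1=T^kA_2B_2$ for some $k\in\mathbb{Z}$. Then the entries of the matrix $A_1B_1$ have a common divisor strictly larger than $1$.
   Context: $T=\begin{pmatrix}1&1\\0&1\end{pmatrix}$. $X_N^\star=\{\begin{pmatrix}c&b\\0&N/c\end{pmatrix}:c\ge1,\ c\mid N,\ 0\le b\le N/c-1,\ \gcd(c,b,N/c)=1\}$. *)

theory Defs
  imports "HOL-Analysis.Analysis"
begin

text \<open>2x2 integer matrices are represented as int^2^2; mat2 a b c d is the matrix
  with rows (a, b) and (c, d). Matrix product is the library's (**).\<close>

definition mat2 :: "int \<Rightarrow> int \<Rightarrow> int \<Rightarrow> int \<Rightarrow> int^2^2" where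
  "mat2 a b c d = vector [vector [a, b], vector [c, d]]"

definition T_mat :: "int^2^2" where
  "T_mat = mat2 1 1 0 1"

definition T_pow :: "int \<Rightarrow> int^2^2" where
  "T_pow k = mat2 1 k 0 1"

definition Xstar :: "nat \<Rightarrow> (int^2^2) set" where
  "Xstar N = {mat2 c b 0 (int N div c) | c b.
      c \<ge> 1 \<and> c dvd int N \<and> 0 \<le> b \<and> b \<le> int N div c - 1 \<and>
      gcd (gcd c b) (int N div c) = 1}"

end

theory Submission
  imports Defs
begin
lemma mat2_ent: "mat2 a b c d $ 1 $ 1 = a" "mat2 a b c d $ 1 $ 2 = b" "mat2 a b c d $ 2 $ 1 = c" "mat2 a b c d $ 2 $ 2 = d"
  unfolding mat2_def by simp_all
lemma mat2_eq: "mat2 a b c d = mat2 a' b' c' d' \<longleftrightarrow> a=a' \<and> b=b' \<and> c=c' \<and> d=d'"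
  by (metis mat2_ent)
lemma mat2_ext: "(M::int^2^2) = mat2 (M$1$1) (M$1$2) (M$2$1) (M$2$2)"
  by (simp add: vec_eq_iff forall_2 mat2_ent)
lemma mat2_mult: "mat2 a b c d ** mat2 a' b' c' d' =
   mat2 (a*a'+b*c') (a*b'+b*d') (c*a'+d*c') (c*b'+d*d')"
  by (simp add: vec_eq_iff forall_2 matrix_matrix_mult_def sum_2 mat2_ent)
lemma mat2_dvd: "x dvd a \<Longrightarrow> x dvd b \<Longrightarrow> x dvd c \<Longrightarrow> x dvd d \<Longrightarrow>
   \<forall>i j. x dvd mat2 a b c d $ i $ j"
  unfolding forall_2 mat2_ent by simp
lemma small_dvd_zero: "(g::int) > 0 \<Longrightarrow> g dvd x \<Longrightarrow> \<bar>x\<bar> < g \<Longrightarrow> x = 0"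
  using dvd_imp_le_int[of x g] by linarith
lemma Xstar_E:
  assumes "A \<in> Xstar N"
  obtains c b d where "A = mat2 c b 0 d" "c \<ge> 1" "d \<ge> 1" "c * d = int N" "0 \<le> b" "b < d"
proof -
  from assms obtain c b where h: "A = mat2 c b 0 (int N div c)" "c \<ge> 1" "c dvd int N"
     "0 \<le> b" "b \<le> int N div c - 1" unfolding Xstar_def by blast
  show ?thesis using h by (intro that[of c b "int N div c"]) auto
qed

theorem mainTheorem15:
  fixes n m :: nat and A1 B1 A2 B2 :: "int^2^2" and k :: int
  assumes "A1 \<in> Xstar n" and "B1 \<in> Xstar m"
    and "A2 \<in> Xstar n" and "B2 \<in> Xstar m"
    and "(A1, B1) \<noteq> (A2, B2)"
    and "A1 ** B1 = T_pow k ** (A2 ** B2)"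
  shows "\<exists>d::int. d > 1 \<and> (\<forall>i j. d dvd (A1 ** B1) $ i $ j)"
proof (rule ccontr)
  assume nd: "\<not> ?thesis"
  obtain c1 b1 d1 where A1: "A1 = mat2 c1 b1 0 d1" "c1 \<ge> 1" "d1 \<ge> 1" "c1 * d1 = int n" "0 \<le> b1" "b1 < d1"
    using Xstar_E[OF assms(1)] by blast
  obtain e1 f1 g1 where B1: "B1 = mat2 e1 f1 0 g1" "e1 \<ge> 1" "g1 \<ge> 1" "e1 * g1 = int m" "0 \<le> f1" "f1 < g1"
    using Xstar_E[OF assms(2)] by blast
  obtain c2 b2 d2 where A2: "A2 = mat2 c2 b2 0 d2" "c2 \<ge> 1" "d2 \<ge> 1" "c2 * d2 = int n" "0 \<le> b2" "b2 < d2"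
    using Xstar_E[OF assms(3)] by blast
  obtain e2 f2 g2 where B2: "B2 = mat2 e2 f2 0 g2" "e2 \<ge> 1" "g2 \<ge> 1" "e2 * g2 = int m" "0 \<le> f2" "f2 < g2"
    using Xstar_E[OF assms(4)] by blast
  have M: "A1 ** B1 = mat2 (c1*e1) (c1*f1+b1*g1) 0 (d1*g1)"
    using A1 B1 by (simp add: mat2_mult)
  have E: "c1*e1 = c2*e2" "c1*f1+b1*g1 = c2*f2+b2*g2 + k*(d2*g2)" "d1*g1 = d2*g2"
    using assms(6) unfolding A2 B2 M T_pow_def by (simp_all add: mat2_mult mat2_eq algebra_simps)
  have nodiv: "x \<le> 1" if "x dvd c1*e1" "x dvd c1*f1+b1*g1" "x dvd d1*g1" for x :: int
  proof (rule ccontr)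
    assume "\<not> x \<le> 1"
    hence "x > 1" by simp
    moreover have "\<forall>i j. x dvd (A1 ** B1) $ i $ j" unfolding M
      by (rule mat2_dvd) (use that in auto)
    ultimately show False using nd by blast
  qed
  have cg1: "gcd c1 g1 = 1"
  proof -
    have "gcd c1 g1 \<le> 1" by (rule nodiv) (auto simp: dvd_mult)
    moreover have "gcd c1 g1 \<noteq> 0" using A1 by auto
    moreover have "gcd c1 g1 \<ge> 0" by simp
    ultimately show ?thesis by linarith
  qed
  have cg2: "gcd c2 g2 = 1"
  proof -
    have "gcd c2 g2 \<le> 1" by (rule nodiv) (auto simp: E dvd_mult)
    moreover have "gcd c2 g2 \<noteq> 0" using A2 by auto
    moreover have "gcd c2 g2 \<ge> 0" by simp
    ultimately show ?thesis by linarith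
  qed
  have "gcd (e1*c1) (e1*g1) = e1" using cg1 B1(2) by (simp add: gcd_mult_left)
  moreover have "gcd (e2*c2) (e2*g2) = e2" using cg2 B2(2) by (simp add: gcd_mult_left)
  ultimately have ee: "e1 = e2" using E B1 B2 by (simp add: mult.commute)
  have "e1*g1 = e1*g2" using ee B1(4) B2(4) by simp
  then have gg: "g1 = g2" using B1(2) by simp
  have "c1*e1 = c2*e1" using ee E(1) by simp
  then have cc: "c1 = c2" using B1(2) by simp
  have "d1*g1 = d2*g1" using gg E(3) by simp
  then have dd: "d1 = d2" using B1(3) by simp
  have "g1 dvd c1*(f1-f2)"
  proof -
    have "c1*(f1-f2) = g1*((b2-b1) + k*d1)" using E(2) cc gg dd by (simp add: algebra_simps)
    then show ?thesis by simp
  qed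
  then have "g1 dvd f1-f2" using cg1
    by (metis coprime_dvd_mult_right_iff gcd.commute coprime_iff_gcd_eq_1)
  then have ff: "f1 = f2" using small_dvd_zero[of g1 "f1-f2"] B1 B2 gg by simp
  have "b1*g1 = (b2 + k*d1)*g1" using E(2) cc gg dd ff by (simp add: algebra_simps)
  then have "b1 = b2 + k*d1" using B1 by simp
  then have "d1 dvd b1-b2" by simp
  then have bb: "b1 = b2" using small_dvd_zero[of d1 "b1-b2"] A1 A2 dd by simp
  show False using assms(5) A1 A2 B1 B2 bb cc dd ee ff gg by simp
qed
end
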